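(* Let $(G,\sigma)$ be a connection graph and $i,j\in V$ with $i\neq j$. Write $j^c=V\setminus\{j\}$ and partition the connection Laplacian as $\mathcal{L}=\begin{bmatrix}\mathcal{L}_{j}&\mathcal{L}_{j,j^c}\\ \mathcal{L}_{j^c,j}&\mathcal{L}_{j^c}\end{bmatrix}$ (reordering nodes so that $j$ comes first). Then $$\Omega^0_{ij}=-\big((\mathcal{L}_{j^c})^{-1}\mathcal{L}_{j^c,j}\big)(i),$$ where $(\cdot)(i)$ denotes the $d\times d$ block corresponding to node $i$.
   Context: A connection graph $(G,\sigma)$: finite connected weighted graph $G=(V,E,W)$, $V=\{1,\dots,n\}$, with $w_{ij}>0$ iff $\{i,j\}\in E$, $\deg(i)=\sum_j w_{ij}$, and $\sigma$ mapping oriented edges to $\mathsf{O}(d)$ with $\sigma_{ji}=\sigma_{ij}^{\mathrm T}$. The connection Laplacian $\mathcal{L}$ is the $nd\times nd$ block matrix with $d\times d$ blocks $\deg(i)I_d$ on the diagonal, $-w_{ij}\sigma_{ij}$ for $i\sim j$, $0$ otherwise. Simple random walk $(X_t)$ with transition probabilities $w_{ij}/\deg(i)$; $T^0_j=\inf\{t\ge0:X_t=j\}$; $\Omega^0_{ij}=\mathbb{E}\big[\prod_{\ell=1}^{T^0_j}\sigma_{X_{\ell-1}X_\ell}\mid X_0=i\big]$ (ordered product). *)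

theory Defs
  imports "HOL-Analysis.Infinite_Sum" "Jordan_Normal_Form.Matrix"
begin

text \<open>Vertices are 0..<n (the paper's 1..n shifted by one). w i k is the weight,
  sig i k the connection matrix (a d x d real matrix) on the oriented edge (i,k).\<close>

definition vdeg :: "nat \<Rightarrow> (nat \<Rightarrow> nat \<Rightarrow> real) \<Rightarrow> nat \<Rightarrow> real" where
  "vdeg n w i = (\<Sum>k<n. w i k)"

definition connection_graph ::
  "nat \<Rightarrow> nat \<Rightarrow> (nat \<Rightarrow> nat \<Rightarrow> real) \<Rightarrow> (nat \<Rightarrow> nat \<Rightarrow> real mat) \<Rightarrow> bool" where
  "connection_graph n d w sig \<longleftrightarrow>
     (\<forall>i<n. \<forall>k<n. w i k \<ge> 0 \<and> w i k = w k i) \<and>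
     (\<forall>i<n. w i i = 0) \<and>
     (\<forall>i<n. \<forall>k<n. 0 < w i k \<longrightarrow>
        sig i k \<in> carrier_mat d d \<and> sig i k * transpose_mat (sig i k) = 1\<^sub>m d \<and>
        sig k i = transpose_mat (sig i k)) \<and>
     (\<forall>i<n. \<forall>k<n. (i, k) \<in> {(a, b). a < n \<and> b < n \<and> 0 < w a b}\<^sup>*)"

text \<open>Connection Laplacian: index r of the nd x nd matrix corresponds to node r div d,
  component r mod d.\<close>
definition conn_laplacian ::
  "nat \<Rightarrow> nat \<Rightarrow> (nat \<Rightarrow> nat \<Rightarrow> real) \<Rightarrow> (nat \<Rightarrow> nat \<Rightarrow> real mat) \<Rightarrow> real mat" where
  "conn_laplacian n d w sig = mat (n * d) (n * d) (\<lambda>(r, c).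
     (let i = r div d; a = r mod d; k = c div d; b = c mod d in
      if i = k then (if a = b then vdeg n w i else 0)
      else if 0 < w i k then - (w i k * (sig i k $$ (a, b))) else 0))"

text \<open>Nodes of j^c = V - {j}, enumerated in increasing order: position p is node
  skip j p; node i (i \<noteq> j) has position pos j i.\<close>
definition skip :: "nat \<Rightarrow> nat \<Rightarrow> nat" where
  "skip j p = (if p < j then p else p + 1)"

definition pos :: "nat \<Rightarrow> nat \<Rightarrow> nat" where
  "pos j i = (if i < j then i else i - 1)"

definition lap_jc :: "nat \<Rightarrow> nat \<Rightarrow> nat \<Rightarrow> real mat \<Rightarrow> real mat" where
  "lap_jc n d j L = mat ((n - 1) * d) ((n - 1) * d) (\<lambda>(r, c).
      L $$ (skip j (r div d) * d + r mod d, skip j (c div d) * d + c mod d))"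

definition lap_jc_j :: "nat \<Rightarrow> nat \<Rightarrow> nat \<Rightarrow> real mat \<Rightarrow> real mat" where
  "lap_jc_j n d j L = mat ((n - 1) * d) d (\<lambda>(r, b).
      L $$ (skip j (r div d) * d + r mod d, j * d + b))"

definition node_block :: "nat \<Rightarrow> nat \<Rightarrow> nat \<Rightarrow> real mat \<Rightarrow> real mat" where
  "node_block d j i M = mat d d (\<lambda>(a, b). M $$ (pos j i * d + a, b))"

text \<open>Random walk paths: a walk starting at x is determined by the list of subsequent
  vertices [X_1, ..., X_T]. Its probability and ordered product of connection matrices:\<close>
fun walk_prob :: "nat \<Rightarrow> (nat \<Rightarrow> nat \<Rightarrow> real) \<Rightarrow> nat \<Rightarrow> nat list \<Rightarrow> real" where
  "walk_prob n w x [] = 1"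
| "walk_prob n w x (y # ys) = w x y / vdeg n w x * walk_prob n w y ys"

fun walk_sig :: "nat \<Rightarrow> (nat \<Rightarrow> nat \<Rightarrow> real mat) \<Rightarrow> nat \<Rightarrow> nat list \<Rightarrow> real mat" where
  "walk_sig d sig x [] = 1\<^sub>m d"
| "walk_sig d sig x (y # ys) = sig x y * walk_sig d sig y ys"

text \<open>Possible trajectories (X_1..X_T) up to the hitting time T = T^0_j \<ge> 1 (start i \<noteq> j):
  vertices in V, last one j, no earlier visit to j.\<close>
definition first_passage_paths :: "nat \<Rightarrow> nat \<Rightarrow> nat list set" where
  "first_passage_paths n j =
     {ys. ys \<noteq> [] \<and> set ys \<subseteq> {..<n} \<and> last ys = j \<and> j \<notin> set (butlast ys)}"

text \<open>Omega^0_{ij} = E[ordered product of sigma along the walk up to T^0_j | X_0 = i],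
  the expectation written (entrywise) as a sum over the discrete trajectories.\<close>
definition Omega0 ::
  "nat \<Rightarrow> nat \<Rightarrow> (nat \<Rightarrow> nat \<Rightarrow> real) \<Rightarrow> (nat \<Rightarrow> nat \<Rightarrow> real mat) \<Rightarrow> nat \<Rightarrow> nat \<Rightarrow> real mat" where
  "Omega0 n d w sig i j = mat d d (\<lambda>(a, b).
     \<Sum>\<^sub>\<infinity>ys\<in>first_passage_paths n j. walk_prob n w i ys * (walk_sig d sig i ys $$ (a, b)))"

end

theory Submission
  imports Defs "Jordan_Normal_Form.Determinant"
begin

lemma det_ne0_invertible:
  fixes A :: "real mat"
  assumes A: "A \<in> carrier_mat m m" and d: "det A \<noteq> 0"
  shows "invertible_mat A"
proof -
  have "A \<in> Units (ring_mat TYPE(real) m ())" by (rule det_non_zero_imp_unit[OF A d])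
  then obtain B where B: "B \<in> carrier_mat m m" "B * A = 1\<^sub>m m" "A * B = 1\<^sub>m m"
    unfolding Units_def ring_mat_def by auto
  show ?thesis unfolding invertible_mat_def inverts_mat_def square_mat.simps
    using A B by (intro conjI exI[of _ B]) auto
qed

lemma sum_blocks:
  fixes f :: "nat \<Rightarrow> 'a::comm_monoid_add"
  shows "(\<Sum>c\<in>{0..<m*d}. f c) = (\<Sum>l<m. \<Sum>e<d. f (l*d+e))"
proof (induction m)
  case 0 then show ?case by simp
next
  case (Suc m)
  have "{0..<Suc m * d} = {0..<m*d} \<union> {m*d..<m*d+d}" by auto
  moreover have "(\<Sum>c\<in>{m*d..<m*d+d}. f c) = (\<Sum>e<d. f (m*d+e))"
    using sum.shift_bounds_nat_ivl[of f 0 "m*d" d] by (simp add: add.commute atLeast0LessThan)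
  ultimately show ?case using Suc by (simp add: sum.union_disjoint)
qed

locale cg =
  fixes n d :: nat and w :: "nat \<Rightarrow> nat \<Rightarrow> real" and sig :: "nat \<Rightarrow> nat \<Rightarrow> real mat"
  assumes cgr: "connection_graph n d w sig"
begin

lemmas C = cgr[unfolded connection_graph_def]
lemma w_nonneg: "i < n \<Longrightarrow> k < n \<Longrightarrow> 0 \<le> w i k"
  using C[THEN conjunct1] by simp
lemma w_sym: "i < n \<Longrightarrow> k < n \<Longrightarrow> w i k = w k i"
  using C[THEN conjunct1] by simp
lemma w_diag: "i < n \<Longrightarrow> w i i = 0"
  using C[THEN conjunct2, THEN conjunct1] by simp
lemma sig_carr: "i < n \<Longrightarrow> k < n \<Longrightarrow> 0 < w i k \<Longrightarrow> sig i k \<in> carrier_mat d d"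
  using C[THEN conjunct2, THEN conjunct2, THEN conjunct1] by simp
lemma sig_orth: "i < n \<Longrightarrow> k < n \<Longrightarrow> 0 < w i k \<Longrightarrow> sig i k * transpose_mat (sig i k) = 1\<^sub>m d"
  using C[THEN conjunct2, THEN conjunct2, THEN conjunct1] by simp
lemma sig_tr: "i < n \<Longrightarrow> k < n \<Longrightarrow> 0 < w i k \<Longrightarrow> sig k i = transpose_mat (sig i k)"
  using C[THEN conjunct2, THEN conjunct2, THEN conjunct1] by simp
lemma conn: "i < n \<Longrightarrow> k < n \<Longrightarrow> (i, k) \<in> {(a, b). a < n \<and> b < n \<and> 0 < w a b}\<^sup>*"
  using C[THEN conjunct2, THEN conjunct2, THEN conjunct2] by simp

lemma sig_orth': 
  assumes "i < n" "k < n" "0 < w i k"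
  shows "transpose_mat (sig i k) * sig i k = 1\<^sub>m d"
proof -
  have "0 < w k i" using assms w_sym by simp
  then have "sig k i * transpose_mat (sig k i) = 1\<^sub>m d" using sig_orth assms by simp
  moreover have "sig i k = transpose_mat (sig k i)" using sig_tr[of k i] assms \<open>0 < w k i\<close> by simp
  ultimately show ?thesis by simp
qed

lemma vdeg_nonneg: "x < n \<Longrightarrow> 0 \<le> vdeg n w x"
  unfolding vdeg_def by (auto intro!: sum_nonneg w_nonneg)

lemma vdeg_ge: "x < n \<Longrightarrow> y < n \<Longrightarrow> w x y \<le> vdeg n w x"
  unfolding vdeg_def using w_nonneg
  by (intro member_le_sum) auto

lemma vdeg_pos:
  assumes "x < n" "z < n" "x \<noteq> z"
  shows "0 < vdeg n w x"
proof -
  from conn[OF assms(1,2)] assms(3) obtain y where "(x, y) \<in> {(a, b). a < n \<and> b < n \<and> 0 < w a b}"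
    by (auto elim: converse_rtranclE)
  then have "y < n" "0 < w x y" by auto
  then show ?thesis using vdeg_ge[OF assms(1) \<open>y < n\<close>] by linarith
qed

end

lemma mult_entry:
  fixes A B :: "real mat"
  assumes "A \<in> carrier_mat d d" "B \<in> carrier_mat d k" "a < d" "b < k"
  shows "(A * B) $$ (a, b) = (\<Sum>c<d. A $$ (a, c) * B $$ (c, b))"
  using assms by (simp add: scalar_prod_def atLeast0LessThan)

lemma entry_bound:
  fixes M :: "real mat"
  assumes M: "M \<in> carrier_mat d d" and o: "M * transpose_mat M = 1\<^sub>m d" and ab: "a < d" "b < d"
  shows "\<bar>M $$ (a, b)\<bar> \<le> 1"
proof -
  have "(M * transpose_mat M) $$ (a, a) = (\<Sum>c<d. M $$ (a, c) * M $$ (a, c))"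
    using M ab by (simp add: scalar_prod_def atLeast0LessThan)
  then have s: "(\<Sum>c<d. M $$ (a, c) * M $$ (a, c)) = 1" using o ab by simp
  have "M $$ (a, b) * M $$ (a, b) \<le> (\<Sum>c<d. M $$ (a, c) * M $$ (a, c))"
    using ab by (intro member_le_sum) auto
  then have "(M $$ (a, b))^2 \<le> 1" using s by (simp add: power2_eq_square)
  then show ?thesis by (simp add: abs_square_le_1)
qed

context cg begin

lemma walk_prob_nonneg: "x < n \<Longrightarrow> set ys \<subseteq> {..<n} \<Longrightarrow> 0 \<le> walk_prob n w x ys"
proof (induction ys arbitrary: x)
  case Nil then show ?case by simp
next
  case (Cons y ys)
  then show ?case using w_nonneg[of x y] vdeg_nonneg[of x] by simp
qed

lemma walk_sig_orth:
  "x < n \<Longrightarrow> set ys \<subseteq> {..<n} \<Longrightarrow> walk_prob n w x ys \<noteq> 0 \<Longrightarrow>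
   walk_sig d sig x ys \<in> carrier_mat d d \<and> walk_sig d sig x ys * transpose_mat (walk_sig d sig x ys) = 1\<^sub>m d"
proof (induction ys arbitrary: x)
  case Nil then show ?case by simp
next
  case (Cons y ys)
  then have y: "y < n" and s: "set ys \<subseteq> {..<n}" by auto
  from Cons.prems have wxy: "w x y \<noteq> 0" and p: "walk_prob n w y ys \<noteq> 0" by auto
  then have wp: "0 < w x y" using w_nonneg[OF Cons.prems(1) y] by simp
  have A: "sig x y \<in> carrier_mat d d" and Ao: "sig x y * transpose_mat (sig x y) = 1\<^sub>m d"
    using sig_carr sig_orth Cons.prems(1) y wp by auto
  from Cons.IH[OF y s p] have B: "walk_sig d sig y ys \<in> carrier_mat d d"
    and Bo: "walk_sig d sig y ys * transpose_mat (walk_sig d sig y ys) = 1\<^sub>m d" by auto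
  define P where "P = sig x y" define Q where "Q = walk_sig d sig y ys"
  have PQ: "P \<in> carrier_mat d d" "Q \<in> carrier_mat d d" "P * transpose_mat P = 1\<^sub>m d"
    "Q * transpose_mat Q = 1\<^sub>m d" using A B Ao Bo unfolding P_def Q_def by auto
  have tPQ: "transpose_mat (P * Q) = transpose_mat Q * transpose_mat P"
    using PQ by (simp add: transpose_mult)
  have c: "transpose_mat Q \<in> carrier_mat d d" "transpose_mat P \<in> carrier_mat d d" "P * Q \<in> carrier_mat d d"
    "Q * transpose_mat Q \<in> carrier_mat d d"
    using PQ by auto
  have "(P * Q) * transpose_mat (P * Q) = (P * Q) * (transpose_mat Q * transpose_mat P)"
    by (simp only: tPQ)
  also have "\<dots> = ((P * Q) * transpose_mat Q) * transpose_mat P"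
    using assoc_mult_mat[OF c(3) c(1) c(2)] by simp
  also have "\<dots> = P * (Q * transpose_mat Q) * transpose_mat P"
    using assoc_mult_mat[OF PQ(1) PQ(2) c(1)] by simp
  also have "\<dots> = P * 1\<^sub>m d * transpose_mat P" by (simp only: PQ(4))
  also have "\<dots> = 1\<^sub>m d" using PQ by simp
  finally show ?case using PQ unfolding P_def Q_def by simp
qed

lemma walk_sig_entry_bound:
  assumes "x < n" "set ys \<subseteq> {..<n}" "a < d" "b < d"
  shows "\<bar>walk_prob n w x ys * (walk_sig d sig x ys $$ (a, b))\<bar> \<le> walk_prob n w x ys"
proof (cases "walk_prob n w x ys = 0")
  case True then show ?thesis by simp
next
  case False
  from walk_sig_orth[OF assms(1,2) False] have "\<bar>walk_sig d sig x ys $$ (a, b)\<bar> \<le> 1"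
    using entry_bound assms by blast
  moreover have "0 \<le> walk_prob n w x ys" using walk_prob_nonneg assms by simp
  ultimately show ?thesis by (simp add: abs_mult mult_left_le)
qed

end

locale cgj = cg +
  fixes j :: nat
  assumes jn: "j < n" and n2: "1 < n"
begin

abbreviation "FP \<equiv> first_passage_paths n j"
definition "FPT T = {ys \<in> FP. length ys \<le> T}"

lemma fpp_Cons_iff:
  "(y # ys \<in> FP) \<longleftrightarrow> (ys = [] \<and> y = j) \<or> (y < n \<and> y \<noteq> j \<and> ys \<in> FP)"
  using jn by (cases ys) (auto simp: first_passage_paths_def)

lemma fpp_nonempty: "ys \<in> FP \<Longrightarrow> ys \<noteq> []"
  by (simp add: first_passage_paths_def)

lemma fpp_set: "ys \<in> FP \<Longrightarrow> set ys \<subseteq> {..<n}"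
  by (simp add: first_passage_paths_def)

lemma fpp_decomp: "FP = insert [j] (\<Union>y\<in>{..<n}-{j}. (#) y ` FP)"
proof (rule equalityI; rule subsetI)
  fix ys assume "ys \<in> FP"
  then obtain y ys' where ys: "ys = y # ys'" using fpp_nonempty by (cases ys) auto
  then show "ys \<in> insert [j] (\<Union>y\<in>{..<n}-{j}. (#) y ` FP)"
    using \<open>ys \<in> FP\<close> fpp_Cons_iff by auto
next
  fix ys assume "ys \<in> insert [j] (\<Union>y\<in>{..<n}-{j}. (#) y ` FP)"
  then show "ys \<in> FP" using fpp_Cons_iff by auto
qed

lemma fpt_Suc: "FPT (Suc T) = insert [j] (\<Union>y\<in>{..<n}-{j}. (#) y ` FPT T)"
proof (rule equalityI; rule subsetI)
  fix ys assume "ys \<in> FPT (Suc T)"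
  then have "ys \<in> FP" "length ys \<le> Suc T" by (auto simp: FPT_def)
  then obtain y ys' where ys: "ys = y # ys'" using fpp_nonempty by (cases ys) auto
  then show "ys \<in> insert [j] (\<Union>y\<in>{..<n}-{j}. (#) y ` FPT T)"
    using \<open>ys \<in> FP\<close> \<open>length ys \<le> Suc T\<close> fpp_Cons_iff by (auto simp: FPT_def)
next
  fix ys assume "ys \<in> insert [j] (\<Union>y\<in>{..<n}-{j}. (#) y ` FPT T)"
  then show "ys \<in> FPT (Suc T)" using fpp_Cons_iff by (auto simp: FPT_def)
qed

lemma fpt_finite: "finite (FPT T)"
proof -
  have "FPT T \<subseteq> {xs. set xs \<subseteq> {..<n} \<and> length xs \<le> T}"
    by (auto simp: FPT_def first_passage_paths_def)
  then show ?thesis using finite_lists_length_le[of "{..<n}" T] finite_subset by blast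
qed

lemma vdeg_pos': "x < n \<Longrightarrow> 0 < vdeg n w x"
  using vdeg_pos[of x "if x = 0 then 1 else 0"] n2 by (auto split: if_splits)

lemma P_sum: "x < n \<Longrightarrow> (\<Sum>y<n. w x y / vdeg n w x) = 1"
  using vdeg_pos'[of x] by (simp add: sum_divide_distrib[symmetric] vdeg_def[symmetric])

lemma P_nonneg: "x < n \<Longrightarrow> y < n \<Longrightarrow> 0 \<le> w x y / vdeg n w x"
  using w_nonneg vdeg_nonneg by simp

lemma sum_fpt_le: "x < n \<Longrightarrow> sum (walk_prob n w x) (FPT T) \<le> 1"
proof (induction T arbitrary: x)
  case 0
  have "FPT 0 = {}" using fpp_nonempty by (auto simp: FPT_def)
  then show ?case by simp
next
  case (Suc T)
  let ?Y = "{..<n}-{j}"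
  have nin: "[j] \<notin> (\<Union>y\<in>?Y. (#) y ` FPT T)" by auto
  have fin: "finite (\<Union>y\<in>?Y. (#) y ` FPT T)" using fpt_finite by auto
  have "sum (walk_prob n w x) (FPT (Suc T)) =
        walk_prob n w x [j] + sum (walk_prob n w x) (\<Union>y\<in>?Y. (#) y ` FPT T)"
    unfolding fpt_Suc using nin fin by (simp add: sum.insert)
  also have "sum (walk_prob n w x) (\<Union>y\<in>?Y. (#) y ` FPT T) =
      (\<Sum>y\<in>?Y. sum (walk_prob n w x) ((#) y ` FPT T))"
    using fpt_finite by (intro sum.UNION_disjoint) auto
  also have "\<dots> = (\<Sum>y\<in>?Y. w x y / vdeg n w x * sum (walk_prob n w y) (FPT T))"
    by (intro sum.cong refl) (simp add: sum.reindex sum_distrib_left)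
  also have "\<dots> \<le> (\<Sum>y\<in>?Y. w x y / vdeg n w x)"
    using Suc P_nonneg by (intro sum_mono mult_left_le) auto
  finally have "sum (walk_prob n w x) (FPT (Suc T)) \<le> w x j / vdeg n w x + (\<Sum>y\<in>?Y. w x y / vdeg n w x)"
    by simp
  also have "\<dots> = (\<Sum>y<n. w x y / vdeg n w x)"
    using sum.remove[of "{..<n}" j "\<lambda>y. w x y / vdeg n w x"] jn by simp
  finally show ?case using P_sum Suc by simp
qed

lemma walk_prob_summable: assumes "x < n" shows "walk_prob n w x summable_on FP"
proof (rule nonneg_bdd_above_summable_on)
  show "\<And>ys. ys \<in> FP \<Longrightarrow> 0 \<le> walk_prob n w x ys"
    using walk_prob_nonneg assms fpp_set by blast
  show "bdd_above (sum (walk_prob n w x) ` {F. F \<subseteq> FP \<and> finite F})"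
  proof (rule bdd_aboveI2)
    fix F assume F: "F \<in> {F. F \<subseteq> FP \<and> finite F}"
    define T where "T = Max (insert 0 (length ` F))"
    have "F \<subseteq> FPT T" using F unfolding FPT_def T_def by auto
    then have "sum (walk_prob n w x) F \<le> sum (walk_prob n w x) (FPT T)"
      using fpt_finite walk_prob_nonneg assms fpp_set
      by (intro sum_mono2) (auto simp: FPT_def)
    also have "\<dots> \<le> 1" using sum_fpt_le assms by simp
    finally show "sum (walk_prob n w x) F \<le> 1" .
  qed
qed

lemma term_summable:
  assumes "x < n" "a < d" "b < d"
  shows "(\<lambda>ys. walk_prob n w x ys * (walk_sig d sig x ys $$ (a, b))) summable_on FP"
proof -
  have "(\<lambda>ys. norm (walk_prob n w x ys)) summable_on FP"
    using walk_prob_summable[OF assms(1)] walk_prob_nonneg[OF assms(1)] fpp_set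
    by (subst summable_on_cong[where g = "walk_prob n w x"]) auto
  then have "(\<lambda>ys. walk_prob n w x ys * (walk_sig d sig x ys $$ (a, b))) abs_summable_on FP"
    by (rule abs_summable_on_comparison_test)
       (use walk_sig_entry_bound assms fpp_set walk_prob_nonneg in auto)
  then show ?thesis using summable_on_iff_abs_summable_on_real by blast
qed

end

lemma has_sum_sum_fun:
  fixes f :: "'c \<Rightarrow> 'a \<Rightarrow> real"
  assumes "finite I" "\<And>c. c \<in> I \<Longrightarrow> (f c has_sum s c) A"
  shows "((\<lambda>x. \<Sum>c\<in>I. f c x) has_sum (\<Sum>c\<in>I. s c)) A"
  using assms
proof (induction I rule: finite_induct)
  case empty then show ?case by simp
next
  case (insert c I)
  then have "((\<lambda>x. f c x + (\<Sum>c\<in>I. f c x)) has_sum (s c + (\<Sum>c\<in>I. s c))) A"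
    by (intro has_sum_add) auto
  then show ?case using insert by simp
qed

context cgj begin

definition "Om x a b = infsum (\<lambda>ys. walk_prob n w x ys * (walk_sig d sig x ys $$ (a, b))) FP"

lemma step_eq:
  assumes x: "x < n" and y: "y < n" and ys: "set ys \<subseteq> {..<n}" and ab: "a < d" "b < d"
  shows "walk_prob n w x (y # ys) * (walk_sig d sig x (y # ys) $$ (a, b)) =
     w x y / vdeg n w x * (\<Sum>c<d. sig x y $$ (a, c) * (walk_prob n w y ys * (walk_sig d sig y ys $$ (c, b))))"
proof (cases "w x y = 0")
  case True then show ?thesis by simp
next
  case False
  then have wp: "0 < w x y" using w_nonneg[OF x y] by simp
  have A: "sig x y \<in> carrier_mat d d" using sig_carr[OF x y wp] .
  show ?thesis
  proof (cases "walk_prob n w y ys = 0")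
    case True then show ?thesis by simp
  next
    case False
    then have B: "walk_sig d sig y ys \<in> carrier_mat d d" using walk_sig_orth[OF y ys] by blast
    have "walk_sig d sig x (y # ys) $$ (a, b) = (\<Sum>c<d. sig x y $$ (a, c) * walk_sig d sig y ys $$ (c, b))"
      using mult_entry[OF A B ab] by simp
    then show ?thesis by (simp add: sum_distrib_left mult_ac)
  qed
qed

lemma first_eq:
  assumes x: "x < n" and ab: "a < d" "b < d"
  shows "walk_prob n w x [j] * (walk_sig d sig x [j] $$ (a, b)) = w x j / vdeg n w x * sig x j $$ (a, b)"
proof (cases "w x j = 0")
  case True then show ?thesis by simp
next
  case False
  then have wp: "0 < w x j" using w_nonneg[OF x jn] by simp
  have A: "sig x j \<in> carrier_mat d d" using sig_carr[OF x jn wp] .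
  then show ?thesis by simp
qed

lemma has_sum_rec:
  assumes x: "x < n" and ab: "a < d" "b < d"
  shows "((\<lambda>ys. walk_prob n w x ys * (walk_sig d sig x ys $$ (a, b))) has_sum
     (w x j / vdeg n w x * sig x j $$ (a, b) +
      (\<Sum>y\<in>{..<n}-{j}. w x y / vdeg n w x * (\<Sum>c<d. sig x y $$ (a, c) * Om y c b)))) FP"
proof -
  let ?t = "\<lambda>ys. walk_prob n w x ys * (walk_sig d sig x ys $$ (a, b))"
  let ?Y = "{..<n}-{j}"
  let ?U = "\<Union>y\<in>?Y. (#) y ` FP"
  have U: "(?t has_sum (\<Sum>y\<in>?Y. w x y / vdeg n w x * (\<Sum>c<d. sig x y $$ (a, c) * Om y c b))) ?U"
  proof (rule sum_has_sum)
    show "finite ?Y" by simp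
    show "\<And>y y'. y \<in> ?Y \<Longrightarrow> y' \<in> ?Y \<Longrightarrow> y \<noteq> y' \<Longrightarrow> (#) y ` FP \<inter> (#) y' ` FP = {}" by auto
    fix y assume yY: "y \<in> ?Y"
    then have y: "y < n" by simp
    have hs: "((\<lambda>ys. walk_prob n w y ys * (walk_sig d sig y ys $$ (c, b))) has_sum Om y c b) FP"
      if "c < d" for c
    proof -
      have "(\<lambda>ys. walk_prob n w y ys * (walk_sig d sig y ys $$ (c, b))) summable_on FP"
        using term_summable[OF y that ab(2)] by simp
      then show ?thesis unfolding Om_def by (rule has_sum_infsum)
    qed
    have "((\<lambda>ys. \<Sum>c<d. sig x y $$ (a, c) * (walk_prob n w y ys * (walk_sig d sig y ys $$ (c, b))))
       has_sum (\<Sum>c<d. sig x y $$ (a, c) * Om y c b)) FP"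
      by (rule has_sum_sum_fun) (auto intro: has_sum_cmult_right hs)
    then have "((\<lambda>ys. w x y / vdeg n w x * (\<Sum>c<d. sig x y $$ (a, c) * (walk_prob n w y ys * (walk_sig d sig y ys $$ (c, b)))))
       has_sum (w x y / vdeg n w x * (\<Sum>c<d. sig x y $$ (a, c) * Om y c b))) FP"
      by (rule has_sum_cmult_right)
    then have "((?t \<circ> (#) y) has_sum (w x y / vdeg n w x * (\<Sum>c<d. sig x y $$ (a, c) * Om y c b))) FP"
      using step_eq[OF x y _ ab] fpp_set by (subst has_sum_cong) auto
    then show "(?t has_sum (w x y / vdeg n w x * (\<Sum>c<d. sig x y $$ (a, c) * Om y c b))) ((#) y ` FP)"
      by (subst has_sum_reindex) auto
  qed
  have "[j] \<notin> ?U" by auto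
  from has_sum_insert[OF this U, unfolded first_eq[OF x ab]]
  have "(?t has_sum (w x j / vdeg n w x * sig x j $$ (a, b) +
      (\<Sum>y\<in>?Y. w x y / vdeg n w x * (\<Sum>c<d. sig x y $$ (a, c) * Om y c b)))) (insert [j] ?U)"
    .
  then show ?thesis by (subst fpp_decomp)
qed

lemma Om_lin:
  assumes x: "x < n" and ab: "a < d" "b < d"
  shows "vdeg n w x * Om x a b - (\<Sum>y\<in>{..<n}-{j}. w x y * (\<Sum>c<d. sig x y $$ (a, c) * Om y c b))
     = w x j * sig x j $$ (a, b)"
proof -
  have "Om x a b = w x j / vdeg n w x * sig x j $$ (a, b) +
      (\<Sum>y\<in>{..<n}-{j}. w x y / vdeg n w x * (\<Sum>c<d. sig x y $$ (a, c) * Om y c b))"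
    unfolding Om_def[of x a b] using has_sum_rec[OF assms] by (rule infsumI)
  then have "vdeg n w x * Om x a b = w x j * sig x j $$ (a, b) +
      (\<Sum>y\<in>{..<n}-{j}. w x y * (\<Sum>c<d. sig x y $$ (a, c) * Om y c b))"
    using vdeg_pos'[OF x] by (simp add: distrib_left sum_distrib_left)
  then show ?thesis by simp
qed

end

lemma divmod_block: "a < (d::nat) \<Longrightarrow> (k * d + a) div d = k \<and> (k * d + a) mod d = a"
  by auto

lemma block_lt: "k < m \<Longrightarrow> a < (d::nat) \<Longrightarrow> k * d + a < m * d"
proof -
  assume "k < m" "a < d"
  then have "k * d + a < k * d + d" by simp
  also have "\<dots> = Suc k * d" by simp
  also have "\<dots> \<le> m * d" using \<open>k < m\<close> by (intro mult_le_mono1) simp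
  finally show ?thesis .
qed

lemma skip_lt: "j < n \<Longrightarrow> p < n - 1 \<Longrightarrow> skip j p < n" by (auto simp: skip_def)
lemma skip_ne: "skip j p \<noteq> j" by (auto simp: skip_def)
lemma pos_skip: "pos j (skip j p) = p" by (auto simp: skip_def pos_def)
lemma skip_pos: "l \<noteq> j \<Longrightarrow> skip j (pos j l) = l" by (auto simp: skip_def pos_def)
lemma pos_lt: "l < n \<Longrightarrow> l \<noteq> j \<Longrightarrow> j < n \<Longrightarrow> pos j l < n - 1" by (auto simp: pos_def)

lemma sum_skip:
  assumes "j < n"
  shows "(\<Sum>p<n-1. g (skip j p)) = (\<Sum>l\<in>{..<n}-{j}. g l)"
  by (rule sum.reindex_bij_witness[where i = "pos j" and j = "skip j"])
     (use assms in \<open>auto simp: pos_def skip_def\<close>)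

context cgj begin

definition "Lent k a l e = (if k = l \<and> a = e then vdeg n w k else 0) - w k l * sig k l $$ (a, e)"

lemma L_entry:
  assumes "k < n" "l < n" "a < d" "e < d"
  shows "conn_laplacian n d w sig $$ (k*d+a, l*d+e) = Lent k a l e"
proof -
  have "k*d+a < n*d" "l*d+e < n*d" using block_lt assms by auto
  moreover have "(k*d+a) div d = k" "(k*d+a) mod d = a" "(l*d+e) div d = l" "(l*d+e) mod d = e"
    using assms by auto
  ultimately show ?thesis
    using w_diag[OF assms(1)] w_nonneg[OF assms(1,2)]
    unfolding conn_laplacian_def Lent_def by (auto simp: Let_def)
qed

lemma row_sum:
  assumes r: "r < (n-1)*d"
  shows "(\<Sum>c\<in>{0..<(n-1)*d}. lap_jc n d j (conn_laplacian n d w sig) $$ (r,c) * f c) =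
    (\<Sum>l\<in>{..<n}-{j}. \<Sum>e<d. Lent (skip j (r div d)) (r mod d) l e * f (pos j l * d + e))"
proof -
  have d: "0 < d" using r by (cases d) auto
  have rd: "r div d < n - 1" using r by (simp add: div_less_iff_less_mult d)
  have k: "skip j (r div d) < n" using skip_lt[OF jn rd] .
  have am: "r mod d < d" using d by simp
  have "(\<Sum>c\<in>{0..<(n-1)*d}. lap_jc n d j (conn_laplacian n d w sig) $$ (r,c) * f c) =
     (\<Sum>p<n-1. \<Sum>e<d. lap_jc n d j (conn_laplacian n d w sig) $$ (r,p*d+e) * f (p*d+e))"
    by (rule sum_blocks)
  also have "\<dots> = (\<Sum>p<n-1. \<Sum>e<d. Lent (skip j (r div d)) (r mod d) (skip j p) e * f (pos j (skip j p) * d + e))"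
  proof (intro sum.cong refl)
    fix p e assume p: "p \<in> {..<n-1}" and e: "e \<in> {..<d}"
    have "p*d+e < (n-1)*d" using block_lt p e by auto
    moreover have "(p*d+e) div d = p" "(p*d+e) mod d = e" using e by auto
    ultimately show "lap_jc n d j (conn_laplacian n d w sig) $$ (r,p*d+e) * f (p*d+e) =
        Lent (skip j (r div d)) (r mod d) (skip j p) e * f (pos j (skip j p) * d + e)"
      using r L_entry[OF k skip_lt[OF jn] am] p e by (simp add: lap_jc_def pos_skip)
  qed
  also have "\<dots> = (\<Sum>l\<in>{..<n}-{j}. \<Sum>e<d. Lent (skip j (r div d)) (r mod d) l e * f (pos j l * d + e))"
    by (rule sum_skip[OF jn, where g = "\<lambda>l. \<Sum>e<d. Lent (skip j (r div d)) (r mod d) l e * f (pos j l * d + e)"])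
  finally show ?thesis .
qed

lemma Lent_sum:
  assumes k: "k \<in> {..<n}-{j}" and a: "a < d"
  shows "(\<Sum>l\<in>{..<n}-{j}. \<Sum>e<d. Lent k a l e * g l e) =
     vdeg n w k * g k a - (\<Sum>l\<in>{..<n}-{j}. w k l * (\<Sum>e<d. sig k l $$ (a, e) * g l e))"
proof -
  have "(\<Sum>l\<in>{..<n}-{j}. \<Sum>e<d. Lent k a l e * g l e) =
     (\<Sum>l\<in>{..<n}-{j}. \<Sum>e<d. (if k = l \<and> a = e then vdeg n w k * g l e else 0)) -
     (\<Sum>l\<in>{..<n}-{j}. \<Sum>e<d. w k l * (sig k l $$ (a, e) * g l e))"
    unfolding Lent_def sum_subtractf[symmetric] by (intro sum.cong refl) (auto simp: algebra_simps)
  also have "(\<Sum>l\<in>{..<n}-{j}. \<Sum>e<d. (if k = l \<and> a = e then vdeg n w k * g l e else 0)) =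
     (\<Sum>l\<in>{..<n}-{j}. (if k = l then vdeg n w k * g l a else 0))"
    using a by (intro sum.cong refl) (auto simp: sum.delta)
  also have "\<dots> = vdeg n w k * g k a" using k by (simp add: sum.delta)
  finally show ?thesis by (simp add: sum_distrib_left)
qed

definition "OmM = mat ((n-1)*d) d (\<lambda>(r,b). Om (skip j (r div d)) (r mod d) b)"

lemma LOm: "lap_jc n d j (conn_laplacian n d w sig) * OmM = - lap_jc_j n d j (conn_laplacian n d w sig)"
proof (rule eq_matI)
  show "dim_row (lap_jc n d j (conn_laplacian n d w sig) * OmM) = dim_row (- lap_jc_j n d j (conn_laplacian n d w sig))"
    by (simp add: lap_jc_def lap_jc_j_def)
  show "dim_col (lap_jc n d j (conn_laplacian n d w sig) * OmM) = dim_col (- lap_jc_j n d j (conn_laplacian n d w sig))"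
    by (simp add: OmM_def lap_jc_j_def)
  fix r b assume "r < dim_row (- lap_jc_j n d j (conn_laplacian n d w sig))"
    "b < dim_col (- lap_jc_j n d j (conn_laplacian n d w sig))"
  then have r: "r < (n-1)*d" and b: "b < d" by (auto simp: lap_jc_j_def)
  have d: "0 < d" using r by (cases d) auto
  have rd: "r div d < n - 1" using r by (simp add: div_less_iff_less_mult d)
  define k where "k = skip j (r div d)"
  define a where "a = r mod d"
  have k: "k < n" "k \<noteq> j" using skip_lt[OF jn rd] skip_ne unfolding k_def by auto
  have a: "a < d" using d unfolding a_def by simp
  have "(lap_jc n d j (conn_laplacian n d w sig) * OmM) $$ (r, b) =
     (\<Sum>c\<in>{0..<(n-1)*d}. lap_jc n d j (conn_laplacian n d w sig) $$ (r,c) * OmM $$ (c, b))"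
    using r b by (simp add: lap_jc_def OmM_def scalar_prod_def)
  also have "\<dots> = (\<Sum>l\<in>{..<n}-{j}. \<Sum>e<d. Lent k a l e * OmM $$ (pos j l * d + e, b))"
    unfolding row_sum[OF r] k_def a_def ..
  also have "\<dots> = (\<Sum>l\<in>{..<n}-{j}. \<Sum>e<d. Lent k a l e * Om l e b)"
  proof (intro sum.cong refl)
    fix l e assume l: "l \<in> {..<n}-{j}" and e: "e \<in> {..<d}"
    have "pos j l * d + e < (n-1)*d" using block_lt pos_lt[OF _ _ jn] l e by auto
    then show "Lent k a l e * OmM $$ (pos j l * d + e, b) = Lent k a l e * Om l e b"
      using b e l by (simp add: OmM_def skip_pos)
  qed
  also have "\<dots> = vdeg n w k * Om k a b - (\<Sum>l\<in>{..<n}-{j}. w k l * (\<Sum>e<d. sig k l $$ (a, e) * Om l e b))"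
    using Lent_sum[of k a "\<lambda>l e. Om l e b"] k a by simp
  also have "\<dots> = w k j * sig k j $$ (a, b)" using Om_lin[OF k(1) a b] .
  also have "\<dots> = (- lap_jc_j n d j (conn_laplacian n d w sig)) $$ (r, b)"
  proof -
    have "lap_jc_j n d j (conn_laplacian n d w sig) $$ (r, b) = conn_laplacian n d w sig $$ (k*d+a, j*d+b)"
      using r b unfolding lap_jc_j_def k_def a_def by simp
    also have "\<dots> = Lent k a j b" using L_entry[OF k(1) jn a b] .
    also have "\<dots> = - (w k j * sig k j $$ (a, b))" using k unfolding Lent_def by simp
    finally show ?thesis using r b by (simp add: lap_jc_j_def)
  qed
  finally show "(lap_jc n d j (conn_laplacian n d w sig) * OmM) $$ (r, b) = (- lap_jc_j n d j (conn_laplacian n d w sig)) $$ (r, b)" .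
qed

end

context cgj begin

lemma orth_norm:
  assumes k: "k < n" and l: "l < n" and wp: "0 < w k l"
  shows "(\<Sum>a<d. (\<Sum>e<d. sig k l $$ (a, e) * g e)^2) = (\<Sum>e<d. (g e)^2)"
proof -
  have S: "sig k l \<in> carrier_mat d d" using sig_carr[OF k l wp] .
  have O: "transpose_mat (sig k l) * sig k l = 1\<^sub>m d" using sig_orth'[OF k l wp] .
  have col: "(\<Sum>a<d. sig k l $$ (a, e) * sig k l $$ (a, e')) = (if e = e' then 1 else 0)"
    if "e < d" "e' < d" for e e'
  proof -
    have "(transpose_mat (sig k l) * sig k l) $$ (e, e') = (\<Sum>a<d. sig k l $$ (a, e) * sig k l $$ (a, e'))"
      using S that by (simp add: scalar_prod_def atLeast0LessThan)
    then show ?thesis using O that by simp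
  qed
  have "(\<Sum>a<d. (\<Sum>e<d. sig k l $$ (a, e) * g e)^2) =
     (\<Sum>a<d. \<Sum>e<d. \<Sum>e'<d. (sig k l $$ (a, e) * g e) * (sig k l $$ (a, e') * g e'))"
    by (simp add: power2_eq_square sum_product)
  also have "\<dots> = (\<Sum>e<d. \<Sum>a<d. \<Sum>e'<d. (sig k l $$ (a, e) * g e) * (sig k l $$ (a, e') * g e'))"
    by (rule sum.swap[where g = "\<lambda>a e. \<Sum>e'<d. (sig k l $$ (a, e) * g e) * (sig k l $$ (a, e') * g e')"])
  also have "\<dots> = (\<Sum>e<d. \<Sum>e'<d. \<Sum>a<d. (sig k l $$ (a, e) * g e) * (sig k l $$ (a, e') * g e'))"
    by (rule sum.cong[OF refl], rule sum.swap[where g = "\<lambda>a e'. (sig k l $$ (a, e) * g e) * (sig k l $$ (a, e') * g e')" for e])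
  also have "\<dots> = (\<Sum>e<d. \<Sum>e'<d. g e * g e' * (\<Sum>a<d. sig k l $$ (a, e) * sig k l $$ (a, e')))"
    by (intro sum.cong refl) (simp add: sum_distrib_left mult_ac)
  also have "\<dots> = (\<Sum>e<d. \<Sum>e'<d. g e * g e' * (if e = e' then 1 else 0))"
    by (intro sum.cong refl) (simp add: col)
  also have "\<dots> = (\<Sum>e<d. (g e)^2)"
  proof (rule sum.cong[OF refl])
    fix e assume e: "e \<in> {..<d}"
    have "(\<Sum>e'<d. g e * g e' * (if e = e' then 1 else 0)) = (\<Sum>e'<d. if e = e' then g e * g e' else 0)"
      by (rule sum.cong) auto
    also have "\<dots> = (g e)^2" using e by (simp add: power2_eq_square)
    finally show "(\<Sum>e'<d. g e * g e' * (if e = e' then 1 else 0)) = (g e)^2" .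
  qed
  finally show ?thesis .
qed

end

context cgj begin

lemma kernel_u:
  fixes u :: "nat \<Rightarrow> nat \<Rightarrow> real"
  assumes uj: "\<And>e. u j e = 0"
    and eq: "\<And>k a. k < n \<Longrightarrow> k \<noteq> j \<Longrightarrow> a < d \<Longrightarrow>
       vdeg n w k * u k a - (\<Sum>l<n. w k l * (\<Sum>e<d. sig k l $$ (a, e) * u l e)) = 0"
    and k: "k < n" and a: "a < d"
  shows "u k a = 0"
proof -
  define s where "s k l a = (\<Sum>e<d. sig k l $$ (a, e) * u l e)" for k l a
  define N where "N l = (\<Sum>a<d. (u l a)^2)" for l
  define X where "X k l = (\<Sum>a<d. u k a * s k l a)" for k l
  have h1: "vdeg n w k * N k = (\<Sum>l<n. w k l * X k l)" if k: "k < n" for k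
  proof (cases "k = j")
    case True then show ?thesis by (simp add: N_def X_def uj)
  next
    case False
    have "0 = (\<Sum>a<d. u k a * (vdeg n w k * u k a - (\<Sum>l<n. w k l * s k l a)))"
      using eq[OF k False] unfolding s_def by simp
    also have "\<dots> = vdeg n w k * N k - (\<Sum>a<d. \<Sum>l<n. u k a * (w k l * s k l a))"
      unfolding N_def by (simp add: right_diff_distrib sum_subtractf sum_distrib_left power2_eq_square mult_ac)
    also have "(\<Sum>a<d. \<Sum>l<n. u k a * (w k l * s k l a)) = (\<Sum>l<n. \<Sum>a<d. u k a * (w k l * s k l a))"
      by (rule sum.swap)
    also have "\<dots> = (\<Sum>l<n. w k l * X k l)"
      unfolding X_def by (simp add: sum_distrib_left mult_ac)
    finally show ?thesis by simp
  qed
  have h2: "w k l * (\<Sum>a<d. (u k a - s k l a)^2) = w k l * (N k - 2 * X k l + N l)"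
    if k: "k < n" and l: "l < n" for k l
  proof (cases "w k l = 0")
    case True then show ?thesis by simp
  next
    case False
    then have wp: "0 < w k l" using w_nonneg[OF k l] by simp
    have "(\<Sum>a<d. (s k l a)^2) = N l" unfolding s_def N_def using orth_norm[OF k l wp] by simp
    then have "(\<Sum>a<d. (u k a - s k l a)^2) = N k - 2 * X k l + N l"
      unfolding N_def X_def
      by (simp add: power2_diff sum.distrib sum_subtractf sum_distrib_left mult_ac)
    then show ?thesis by simp
  qed
  have sumN1: "(\<Sum>k<n. \<Sum>l<n. w k l * N k) = (\<Sum>k<n. vdeg n w k * N k)"
    by (simp add: vdeg_def sum_distrib_right)
  have sumN2: "(\<Sum>k<n. \<Sum>l<n. w k l * N l) = (\<Sum>k<n. vdeg n w k * N k)"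
  proof -
    have "(\<Sum>k<n. \<Sum>l<n. w k l * N l) = (\<Sum>l<n. \<Sum>k<n. w k l * N l)" by (rule sum.swap)
    also have "\<dots> = (\<Sum>l<n. \<Sum>k<n. w l k * N l)"
      by (intro sum.cong refl) (simp add: w_sym)
    finally show ?thesis by (simp add: vdeg_def sum_distrib_right)
  qed
  have sumX: "(\<Sum>k<n. \<Sum>l<n. w k l * X k l) = (\<Sum>k<n. vdeg n w k * N k)"
    using h1 by simp
  have tot: "(\<Sum>k<n. \<Sum>l<n. w k l * (\<Sum>a<d. (u k a - s k l a)^2)) = 0"
  proof -
    have "(\<Sum>k<n. \<Sum>l<n. w k l * (\<Sum>a<d. (u k a - s k l a)^2)) =
          (\<Sum>k<n. \<Sum>l<n. w k l * (N k - 2 * X k l + N l))"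
      by (intro sum.cong refl h2) auto
    also have "\<dots> = (\<Sum>k<n. \<Sum>l<n. w k l * N k) - 2 * (\<Sum>k<n. \<Sum>l<n. w k l * X k l) + (\<Sum>k<n. \<Sum>l<n. w k l * N l)"
      by (simp add: algebra_simps sum.distrib sum_subtractf sum_distrib_left)
    finally show ?thesis using sumN1 sumN2 sumX by simp
  qed
  have nn: "0 \<le> w k l * (\<Sum>a<d. (u k a - s k l a)^2)" if "k < n" "l < n" for k l
    using w_nonneg[OF that] by (simp add: sum_nonneg)
  have zero: "w k l * (\<Sum>a<d. (u k a - s k l a)^2) = 0" if k: "k < n" and l: "l < n" for k l
  proof -
    have "\<forall>k\<in>{..<n}. (\<Sum>l<n. w k l * (\<Sum>a<d. (u k a - s k l a)^2)) = 0"
      using tot nn by (subst sum_nonneg_eq_0_iff[symmetric]) (auto intro!: sum_nonneg)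
    then have "(\<Sum>l<n. w k l * (\<Sum>a<d. (u k a - s k l a)^2)) = 0" using k by simp
    then have "\<forall>l\<in>{..<n}. w k l * (\<Sum>a<d. (u k a - s k l a)^2) = 0"
      by (subst (asm) sum_nonneg_eq_0_iff) (auto intro: nn[OF k])
    then show ?thesis using l by simp
  qed
  have h5: "N k = N l" if k: "k < n" and l: "l < n" and wp: "0 < w k l" for k l
  proof -
    have "(\<Sum>a<d. (u k a - s k l a)^2) = 0" using zero[OF k l] wp by simp
    then have "\<forall>a\<in>{..<d}. (u k a - s k l a)^2 = 0" by (subst sum_nonneg_eq_0_iff[symmetric]) auto
    then have "\<forall>a<d. u k a = s k l a" by auto
    then have "N k = (\<Sum>a<d. (s k l a)^2)" unfolding N_def by simp
    also have "\<dots> = N l" unfolding s_def N_def using orth_norm[OF k l wp] by simp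
    finally show ?thesis .
  qed
  have "N k = N j"
    using conn[OF k jn]
  proof (induction rule: converse_rtrancl_induct)
    case base then show ?case by simp
  next
    case (step y z)
    then show ?case using h5[of y z] by auto
  qed
  also have "N j = 0" by (simp add: N_def uj)
  finally have "N k = 0" .
  then have "\<forall>a\<in>{..<d}. (u k a)^2 = 0" unfolding N_def by (subst sum_nonneg_eq_0_iff[symmetric]) auto
  then show ?thesis using a by simp
qed

end

context cgj begin

abbreviation "Lp \<equiv> lap_jc n d j (conn_laplacian n d w sig)"

lemma Lp_carrier: "Lp \<in> carrier_mat ((n-1)*d) ((n-1)*d)"
  by (simp add: lap_jc_def)

lemma Lp_kernel:
  assumes v: "v \<in> carrier_vec ((n-1)*d)" and Lv: "Lp *\<^sub>v v = 0\<^sub>v ((n-1)*d)"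
  shows "v = 0\<^sub>v ((n-1)*d)"
proof -
  define u where "u l e = (if l = j then 0 else v $ (pos j l * d + e))" for l e
  have uj: "\<And>e. u j e = 0" by (simp add: u_def)
  have eq: "vdeg n w k * u k a - (\<Sum>l<n. w k l * (\<Sum>e<d. sig k l $$ (a, e) * u l e)) = 0"
    if k: "k < n" "k \<noteq> j" and a: "a < d" for k a
  proof -
    define r where "r = pos j k * d + a"
    have r: "r < (n-1)*d" unfolding r_def using block_lt pos_lt[OF k jn] a by auto
    have rd: "r div d = pos j k" "r mod d = a" using a unfolding r_def by auto
    have "0 = (Lp *\<^sub>v v) $ r" using Lv r by simp
    also have "\<dots> = (\<Sum>c\<in>{0..<(n-1)*d}. Lp $$ (r,c) * v $ c)"
      using r v by (simp add: lap_jc_def scalar_prod_def)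
    also have "\<dots> = (\<Sum>l\<in>{..<n}-{j}. \<Sum>e<d. Lent k a l e * v $ (pos j l * d + e))"
      unfolding row_sum[OF r] rd skip_pos[OF k(2)] ..
    also have "\<dots> = (\<Sum>l\<in>{..<n}-{j}. \<Sum>e<d. Lent k a l e * u l e)"
      by (intro sum.cong refl) (auto simp: u_def)
    also have "\<dots> = vdeg n w k * u k a - (\<Sum>l\<in>{..<n}-{j}. w k l * (\<Sum>e<d. sig k l $$ (a, e) * u l e))"
      using Lent_sum[of k a u] k a by simp
    also have "(\<Sum>l\<in>{..<n}-{j}. w k l * (\<Sum>e<d. sig k l $$ (a, e) * u l e)) =
               (\<Sum>l<n. w k l * (\<Sum>e<d. sig k l $$ (a, e) * u l e))"
      using sum.remove[of "{..<n}" j "\<lambda>l. w k l * (\<Sum>e<d. sig k l $$ (a, e) * u l e)"] jn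
      by (simp add: uj)
    finally show ?thesis by simp
  qed
  show ?thesis
  proof (rule eq_vecI)
    show "dim_vec v = dim_vec (0\<^sub>v ((n-1)*d))" using v by simp
    fix c assume "c < dim_vec (0\<^sub>v ((n-1)*d))"
    then have c: "c < (n-1)*d" by simp
    have d: "0 < d" using c by (cases d) auto
    have cd: "c div d < n - 1" using c by (simp add: div_less_iff_less_mult d)
    define l where "l = skip j (c div d)"
    have l: "l < n" "l \<noteq> j" unfolding l_def using skip_lt[OF jn cd] skip_ne by auto
    have "u l (c mod d) = 0" using kernel_u[of u, OF uj eq l(1)] d by simp
    moreover have "u l (c mod d) = v $ c" using l unfolding u_def l_def by (simp add: pos_skip)
    ultimately show "v $ c = 0\<^sub>v ((n-1)*d) $ c" using c by simp
  qed
qed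

lemma Lp_invertible: "invertible_mat Lp"
proof (rule det_ne0_invertible[OF Lp_carrier])
  show "det Lp \<noteq> 0"
    using det_0_iff_vec_prod_zero_field[OF Lp_carrier] Lp_kernel by auto
qed

lemma main_eq:
  assumes i: "i < n" "i \<noteq> j"
    and X: "X \<in> carrier_mat ((n - 1) * d) ((n - 1) * d)" "inverts_mat X Lp"
  shows "Omega0 n d w sig i j = - node_block d j i (X * lap_jc_j n d j (conn_laplacian n d w sig))"
proof -
  let ?B = "lap_jc_j n d j (conn_laplacian n d w sig)"
  have XL: "X * Lp = 1\<^sub>m ((n-1)*d)" using X unfolding inverts_mat_def by simp
  have Om: "OmM \<in> carrier_mat ((n-1)*d) d" by (simp add: OmM_def)
  have B: "?B \<in> carrier_mat ((n-1)*d) d" by (simp add: lap_jc_j_def)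
  have "OmM = (X * Lp) * OmM" using XL Om by simp
  also have "\<dots> = X * (Lp * OmM)" using assoc_mult_mat[OF X(1) Lp_carrier Om] .
  also have "\<dots> = X * (- ?B)" using LOm by simp
  also have "\<dots> = - (X * ?B)" using X(1) B by simp
  finally have OmX: "OmM = - (X * ?B)" .
  show ?thesis
  proof (rule eq_matI)
    fix a b assume "a < dim_row (- node_block d j i (X * ?B))" "b < dim_col (- node_block d j i (X * ?B))"
    then have a: "a < d" and b: "b < d" by (auto simp: node_block_def)
    have p: "pos j i * d + a < (n-1)*d" using block_lt pos_lt[OF i jn] a by auto
    have "(- node_block d j i (X * ?B)) $$ (a, b) = - ((X * ?B) $$ (pos j i * d + a, b))"
      using a b by (simp add: node_block_def)
    also have "\<dots> = OmM $$ (pos j i * d + a, b)"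
      using p b X(1) B by (simp add: OmX)
    also have "\<dots> = Om i a b" using p a b i by (simp add: OmM_def skip_pos)
    also have "\<dots> = Omega0 n d w sig i j $$ (a, b)"
      using a b by (simp add: Omega0_def Om_def)
    finally show "Omega0 n d w sig i j $$ (a, b) = (- node_block d j i (X * ?B)) $$ (a, b)" by simp
  qed (auto simp: Omega0_def node_block_def)
qed

end

theorem proposition4p9:
  fixes n d :: nat and w :: "nat \<Rightarrow> nat \<Rightarrow> real" and sig :: "nat \<Rightarrow> nat \<Rightarrow> real mat"
    and i j :: nat
  assumes "connection_graph n d w sig"
    and "i < n" and "j < n" and "i \<noteq> j"
  shows "(\<forall>a<d. \<forall>b<d. (\<lambda>ys. walk_prob n w i ys * (walk_sig d sig i ys $$ (a, b)))
             summable_on first_passage_paths n j)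
    \<and> invertible_mat (lap_jc n d j (conn_laplacian n d w sig))
    \<and> (\<forall>X. X \<in> carrier_mat ((n - 1) * d) ((n - 1) * d)
           \<and> inverts_mat (lap_jc n d j (conn_laplacian n d w sig)) X
           \<and> inverts_mat X (lap_jc n d j (conn_laplacian n d w sig)) \<longrightarrow>
         Omega0 n d w sig i j
           = - node_block d j i (X * lap_jc_j n d j (conn_laplacian n d w sig)))"
proof -
  interpret cgj n d w sig j
    using assms by unfold_locales auto
  show ?thesis
    using term_summable[OF assms(2)] Lp_invertible main_eq[OF assms(2,4)] by blast
qed

end
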